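(* Let $\mathcal{H}$ be a separable Hilbert space and $H$ a positive Hermitian operator on $\mathcal{H}$ with purely discrete spectrum, such that there is no infinite-dimensional subspace on which $H$ is bounded. For $E>0$ let $\mathcal{P}(E)$ be the set of density operators $\rho$ on $\mathcal{H}$ with $\mathrm{Tr}\,\rho H\le E$. Then $\mathcal{P}(E)$ is complete with respect to the Hilbert–Schmidt norm, i.e. every Cauchy sequence in $\mathcal{P}(E)$ converges in $\|\cdot\|_2$ to an element of $\mathcal{P}(E)$.
   Context: A density operator is a Hermitian, positive semidefinite, trace-class operator of trace 1. $\|A\|_2=\sqrt{\mathrm{Tr}\,A^\dagger A}$ is the Hilbert–Schmidt norm. For positive $\rho$, $\mathrm{Tr}\,\rho H=\sum_n\langle n|\rho|n\rangle E_n$ in an eigenbasis of $H$. *)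

theory Defs
  imports "HOL-Analysis.Analysis"
begin

text \<open>
  Model: the separable Hilbert space is l2 over a countable index type 'i
  (vectors are functions 'i => complex with square-summable modulus).
  The Hamiltonian H is given in (the unitary image of) its orthonormal
  eigenbasis, i.e. as the multiplication operator by its eigenvalues Ev.
  Operators are functions on vectors; only their values on l2 matter.
\<close>

definition l2 :: "('i::countable \<Rightarrow> complex) set" where
  "l2 = {x. (\<lambda>i. (cmod (x i))\<^sup>2) summable_on UNIV}"

definition cinner :: "('i::countable \<Rightarrow> complex) \<Rightarrow> ('i \<Rightarrow> complex) \<Rightarrow> complex" where
  "cinner x y = (\<Sum>\<^sub>\<infinity>i. cnj (x i) * y i)"

definition l2norm :: "('i::countable \<Rightarrow> complex) \<Rightarrow> real" where
  "l2norm x = sqrt (\<Sum>\<^sub>\<infinity>i. (cmod (x i))\<^sup>2)"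

definition ket :: "'i::countable \<Rightarrow> ('i \<Rightarrow> complex)" where
  "ket i = (\<lambda>j. if j = i then 1 else 0)"

definition bounded_op :: "(('i::countable \<Rightarrow> complex) \<Rightarrow> ('i \<Rightarrow> complex)) \<Rightarrow> bool" where
  "bounded_op A \<longleftrightarrow>
     (\<forall>x\<in>l2. A x \<in> l2) \<and>
     (\<forall>x\<in>l2. \<forall>y\<in>l2. A (\<lambda>j. x j + y j) = (\<lambda>j. A x j + A y j)) \<and>
     (\<forall>x\<in>l2. \<forall>c::complex. A (\<lambda>j. c * x j) = (\<lambda>j. c * A x j)) \<and>
     (\<exists>C. \<forall>x\<in>l2. l2norm (A x) \<le> C * l2norm x)"

definition hermitian_op :: "(('i::countable \<Rightarrow> complex) \<Rightarrow> ('i \<Rightarrow> complex)) \<Rightarrow> bool" where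
  "hermitian_op A \<longleftrightarrow> (\<forall>x\<in>l2. \<forall>y\<in>l2. cinner x (A y) = cinner (A x) y)"

definition psd_op :: "(('i::countable \<Rightarrow> complex) \<Rightarrow> ('i \<Rightarrow> complex)) \<Rightarrow> bool" where
  "psd_op A \<longleftrightarrow> (\<forall>x\<in>l2. Im (cinner x (A x)) = 0 \<and> Re (cinner x (A x)) \<ge> 0)"

text \<open>For a positive operator A, |A| = A, so A is trace class iff
  sum_i <i|A|i> is finite (this is basis independent for positive operators).\<close>
definition trace_class_pos :: "(('i::countable \<Rightarrow> complex) \<Rightarrow> ('i \<Rightarrow> complex)) \<Rightarrow> bool" where
  "trace_class_pos A \<longleftrightarrow> (\<lambda>i. Re (cinner (ket i) (A (ket i)))) summable_on UNIV"

definition trace_op :: "(('i::countable \<Rightarrow> complex) \<Rightarrow> ('i \<Rightarrow> complex)) \<Rightarrow> complex" where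
  "trace_op A = (\<Sum>\<^sub>\<infinity>i. cinner (ket i) (A (ket i)))"

definition density_op :: "(('i::countable \<Rightarrow> complex) \<Rightarrow> ('i \<Rightarrow> complex)) \<Rightarrow> bool" where
  "density_op A \<longleftrightarrow> bounded_op A \<and> hermitian_op A \<and> psd_op A \<and>
                     trace_class_pos A \<and> trace_op A = 1"

text \<open>Hilbert-Schmidt norm ||A||_2 = sqrt (Tr A^* A) = sqrt (sum_i ||A|i>||^2).\<close>
definition hs_norm :: "(('i::countable \<Rightarrow> complex) \<Rightarrow> ('i \<Rightarrow> complex)) \<Rightarrow> real" where
  "hs_norm A = sqrt (\<Sum>\<^sub>\<infinity>i. (l2norm (A (ket i)))\<^sup>2)"

definition hdom :: "('i::countable \<Rightarrow> real) \<Rightarrow> ('i \<Rightarrow> complex) set" where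
  "hdom Ev = {x \<in> l2. (\<lambda>i. (Ev i * cmod (x i))\<^sup>2) summable_on UNIV}"

definition hop :: "('i::countable \<Rightarrow> real) \<Rightarrow> ('i \<Rightarrow> complex) \<Rightarrow> ('i \<Rightarrow> complex)" where
  "hop Ev x = (\<lambda>i. complex_of_real (Ev i) * x i)"

definition csubspace_l2 :: "('i::countable \<Rightarrow> complex) set \<Rightarrow> bool" where
  "csubspace_l2 V \<longleftrightarrow> (\<lambda>j. 0) \<in> V \<and>
     (\<forall>x\<in>V. \<forall>y\<in>V. (\<lambda>j. x j + y j) \<in> V) \<and>
     (\<forall>x\<in>V. \<forall>c::complex. (\<lambda>j. c * x j) \<in> V)"

definition cindependent :: "('i::countable \<Rightarrow> complex) set \<Rightarrow> bool" where
  "cindependent S \<longleftrightarrow> (\<forall>F c. finite F \<and> F \<subseteq> S \<and>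
       (\<lambda>j. \<Sum>v\<in>F. c v * v j) = (\<lambda>j. 0) \<longrightarrow> (\<forall>v\<in>F. c v = (0::complex)))"

definition infinite_dim :: "('i::countable \<Rightarrow> complex) set \<Rightarrow> bool" where
  "infinite_dim V \<longleftrightarrow> (\<exists>S\<subseteq>V. infinite S \<and> cindependent S)"

definition no_bounded_inf_subspace :: "('i::countable \<Rightarrow> real) \<Rightarrow> bool" where
  "no_bounded_inf_subspace Ev \<longleftrightarrow>
     (\<forall>V. csubspace_l2 V \<and> V \<subseteq> hdom Ev \<and> infinite_dim V \<longrightarrow>
          \<not> (\<exists>C. \<forall>x\<in>V. l2norm (hop Ev x) \<le> C * l2norm x))"

text \<open>Tr(rho H) = sum_n <n|rho|n> E_n (infinite if the series diverges).\<close>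
definition energy_bounded :: "('i::countable \<Rightarrow> real) \<Rightarrow> real \<Rightarrow>
    (('i \<Rightarrow> complex) \<Rightarrow> ('i \<Rightarrow> complex)) \<Rightarrow> bool" where
  "energy_bounded Ev E A \<longleftrightarrow>
     (\<lambda>i. Re (cinner (ket i) (A (ket i))) * Ev i) summable_on UNIV \<and>
     (\<Sum>\<^sub>\<infinity>i. Re (cinner (ket i) (A (ket i))) * Ev i) \<le> E"

definition Pset :: "('i::countable \<Rightarrow> real) \<Rightarrow> real \<Rightarrow>
    (('i \<Rightarrow> complex) \<Rightarrow> ('i \<Rightarrow> complex)) set" where
  "Pset Ev E = {A. density_op A \<and> energy_bounded Ev E A}"

end

theory Submission
  imports Defs
begin

lemma l2_memD: "x \<in> l2 \<Longrightarrow> (\<lambda>i. (cmod (x i))\<^sup>2) summable_on UNIV"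
  by (simp add: l2_def)

lemma sq_sum_le_real: "((a::real) + b)\<^sup>2 \<le> 2 * a\<^sup>2 + 2 * b\<^sup>2"
proof -
  have "0 \<le> (a - b)\<^sup>2" by simp
  thus ?thesis by (simp add: power2_eq_square algebra_simps)
qed

lemma sq_sum_le: "(cmod (a + b))\<^sup>2 \<le> 2 * (cmod a)\<^sup>2 + 2 * (cmod b)\<^sup>2"
proof -
  have "cmod (a+b) \<le> cmod a + cmod b" by (rule norm_triangle_ineq)
  hence "(cmod (a + b))\<^sup>2 \<le> (cmod a + cmod b)\<^sup>2" by (simp add: power_mono)
  also have "\<dots> \<le> 2 * (cmod a)\<^sup>2 + 2 * (cmod b)\<^sup>2"
    by (rule sq_sum_le_real)
  finally show ?thesis .
qed

lemma sq_diff_le: "(cmod (a - b))\<^sup>2 \<le> 2 * (cmod a)\<^sup>2 + 2 * (cmod b)\<^sup>2"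
  using sq_sum_le[of a "-b"] by simp

lemma l2_add: "x \<in> l2 \<Longrightarrow> y \<in> l2 \<Longrightarrow> (\<lambda>j. x j + y j) \<in> l2"
  unfolding l2_def mem_Collect_eq
  apply (rule summable_on_comparison_test[where f="\<lambda>i. 2 * (cmod (x i))\<^sup>2 + 2 * (cmod (y i))\<^sup>2"])
    apply (intro summable_on_add summable_on_cmult_right; assumption)
  using sq_sum_le by auto

lemma l2_diff: "x \<in> l2 \<Longrightarrow> y \<in> l2 \<Longrightarrow> (\<lambda>j. x j - y j) \<in> l2"
  unfolding l2_def mem_Collect_eq
  apply (rule summable_on_comparison_test[where f="\<lambda>i. 2 * (cmod (x i))\<^sup>2 + 2 * (cmod (y i))\<^sup>2"])
    apply (intro summable_on_add summable_on_cmult_right; assumption)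
  using sq_diff_le by auto

lemma l2_scale: "x \<in> l2 \<Longrightarrow> (\<lambda>j. c * x j) \<in> l2"
  unfolding l2_def mem_Collect_eq norm_mult power_mult_distrib
  by (rule summable_on_cmult_right)

lemma l2_fin: "finite F \<Longrightarrow> (\<And>j. j \<notin> F \<Longrightarrow> x j = 0) \<Longrightarrow> x \<in> l2"
  unfolding l2_def mem_Collect_eq
  by (subst summable_on_cong_neutral[where T=F and g="\<lambda>i. (cmod (x i))\<^sup>2"]) auto

lemma ket_l2: "ket i \<in> l2"
  by (rule l2_fin[of "{i}"]) (auto simp: ket_def)

lemma cinner_fin: "finite F \<Longrightarrow> (\<And>j. j \<notin> F \<Longrightarrow> x j = 0) \<Longrightarrow> cinner x y = (\<Sum>j\<in>F. cnj (x j) * y j)"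
  unfolding cinner_def
  by (subst infsum_cong_neutral[where T=F and g="\<lambda>j. cnj (x j) * y j"]) auto

lemma cinner_ket: "cinner (ket i) y = y i"
  by (subst cinner_fin[of "{i}"]) (auto simp: ket_def)

lemma l2norm_sq: "(l2norm x)\<^sup>2 = (\<Sum>\<^sub>\<infinity>i. (cmod (x i))\<^sup>2)"
  unfolding l2norm_def by (simp add: infsum_nonneg)

lemma hs_norm_sq: "(hs_norm A)\<^sup>2 = (\<Sum>\<^sub>\<infinity>i. (l2norm (A (ket i)))\<^sup>2)"
  unfolding hs_norm_def by (simp add: infsum_nonneg)

lemma hs_norm_sq2: "(hs_norm A)\<^sup>2 = (\<Sum>\<^sub>\<infinity>i. \<Sum>\<^sub>\<infinity>j. (cmod (A (ket i) j))\<^sup>2)"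
  unfolding hs_norm_sq l2norm_sq ..

lemma hs_norm_prod: "(\<lambda>(i,j). (cmod (A (ket i) j))\<^sup>2) summable_on UNIV \<Longrightarrow>
   (hs_norm A)\<^sup>2 = (\<Sum>\<^sub>\<infinity>(i,j). (cmod (A (ket i) j))\<^sup>2)"
  unfolding hs_norm_sq2
  using infsum_Sigma_banach[of "\<lambda>(i,j). (cmod (A (ket i) j))\<^sup>2" UNIV "\<lambda>_. UNIV"]
  by simp

lemma cinner_ket_right: "cinner x (ket i) = cnj (x i)"
  unfolding cinner_def
  by (subst infsum_cong_neutral[where T="{i}" and g="\<lambda>j. cnj (x j) * ket i j"]) (auto simp: ket_def)

lemma quad_real:
  fixes A B C :: real
  assumes "A \<ge> 0" "B \<ge> 0" "\<And>t. A * t\<^sup>2 - 2 * B * t + C \<ge> 0"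
  shows "B\<^sup>2 \<le> A * C"
proof (cases "A = 0")
  case True
  show ?thesis
  proof (rule ccontr)
    assume "\<not> ?thesis"
    hence "B > 0" using True assms(2) by auto
    have "A * ((C+1)/(2*B))\<^sup>2 - 2 * B * ((C+1)/(2*B)) + C \<ge> 0" using assms(3) .
    hence "- (C + 1) + C \<ge> 0" using True \<open>B > 0\<close> by (simp add: field_simps)
    thus False by simp
  qed
next
  case False
  hence Ap: "A > 0" using assms(1) by simp
  have "A * (B/A)\<^sup>2 - 2 * B * (B/A) + C \<ge> 0" using assms(3) .
  hence "0 \<le> (A * C - B\<^sup>2) / A" using Ap by (simp add: field_simps power2_eq_square)
  thus ?thesis using Ap by (simp add: divide_nonneg_pos zero_le_divide_iff)
qed

lemma quad_calc:
  fixes c :: complex and P Q t :: real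
  defines "a \<equiv> - (complex_of_real t * c)"
  shows "Re (cnj a * (a * complex_of_real P + c) + (a * cnj c + complex_of_real Q))
       = ((cmod c)\<^sup>2 * P) * t\<^sup>2 - 2 * (cmod c)\<^sup>2 * t + Q"
  unfolding a_def cmod_def
  by (simp add: algebra_simps power2_eq_square)


lemma dens_bounded: "density_op \<rho> \<Longrightarrow> bounded_op \<rho>" by (simp add: density_op_def)
lemma dens_l2: "density_op \<rho> \<Longrightarrow> x \<in> l2 \<Longrightarrow> \<rho> x \<in> l2"
  by (simp add: density_op_def bounded_op_def)
lemma dens_add: "density_op \<rho> \<Longrightarrow> x \<in> l2 \<Longrightarrow> y \<in> l2 \<Longrightarrow> \<rho> (\<lambda>j. x j + y j) = (\<lambda>j. \<rho> x j + \<rho> y j)"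
  by (simp add: density_op_def bounded_op_def)
lemma dens_scale: "density_op \<rho> \<Longrightarrow> x \<in> l2 \<Longrightarrow> \<rho> (\<lambda>j. c * x j) = (\<lambda>j. c * \<rho> x j)"
  by (simp add: density_op_def bounded_op_def)

lemma dens_diag: "density_op \<rho> \<Longrightarrow> Im (\<rho> (ket i) i) = 0 \<and> Re (\<rho> (ket i) i) \<ge> 0"
  using ket_l2[of i] unfolding density_op_def psd_op_def by (metis cinner_ket)

lemma dens_diag_eq: "density_op \<rho> \<Longrightarrow> \<rho> (ket i) i = complex_of_real (Re (\<rho> (ket i) i))"
  using dens_diag[of \<rho> i] by (simp add: complex_eq_iff)

lemma dens_herm: "density_op \<rho> \<Longrightarrow> \<rho> (ket i) j = cnj (\<rho> (ket j) i)"
  using ket_l2[of i] ket_l2[of j] unfolding density_op_def hermitian_op_def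
  by (metis cinner_ket cinner_ket_right)

lemma dens_entry:
  assumes d: "density_op \<rho>"
  shows "(cmod (\<rho> (ket i) j))\<^sup>2 \<le> Re (\<rho> (ket i) i) * Re (\<rho> (ket j) j)"
proof (cases "i = j")
  case True
  then show ?thesis using dens_diag_eq[OF d, of i]
    by (metis norm_of_real power2_abs power2_eq_square order_refl)
next
  case False
  define c where "c = \<rho> (ket j) i"
  define P where "P = Re (\<rho> (ket i) i)"
  define Q where "Q = Re (\<rho> (ket j) j)"
  have pP: "\<rho> (ket i) i = complex_of_real P" unfolding P_def by (rule dens_diag_eq[OF d])
  have qQ: "\<rho> (ket j) j = complex_of_real Q" unfolding Q_def by (rule dens_diag_eq[OF d])
  have cc: "\<rho> (ket i) j = cnj c" unfolding c_def by (rule dens_herm[OF d])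
  have P0: "P \<ge> 0" "Q \<ge> 0" unfolding P_def Q_def using dens_diag[OF d] by auto
  have key: "((cmod c)\<^sup>2 * P) * t\<^sup>2 - 2 * (cmod c)\<^sup>2 * t + Q \<ge> 0" for t
  proof -
    define a where "a = - (complex_of_real t * c)"
    define x where "x = (\<lambda>k. a * ket i k + ket j k)"
    have xl2: "x \<in> l2" unfolding x_def
      by (rule l2_add[OF l2_scale[OF ket_l2] ket_l2])
    have "\<rho> x = (\<lambda>k. \<rho> (\<lambda>k. a * ket i k) k + \<rho> (ket j) k)"
      unfolding x_def using dens_add[OF d l2_scale[OF ket_l2[of i], of a] ket_l2[of j]] by simp
    also have "\<dots> = (\<lambda>k. a * \<rho> (ket i) k + \<rho> (ket j) k)"
      using dens_scale[OF d ket_l2[of i], of a] by simp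
    finally have rx: "\<rho> x = (\<lambda>k. a * \<rho> (ket i) k + \<rho> (ket j) k)" .
    have "cinner x (\<rho> x) = (\<Sum>k\<in>{i,j}. cnj (x k) * \<rho> x k)"
      by (rule cinner_fin) (auto simp: x_def ket_def)
    also have "\<dots> = cnj a * (a * complex_of_real P + c) + (a * cnj c + complex_of_real Q)"
    proof -
      have "x i = a" "x j = 1" using False by (auto simp: x_def ket_def)
      thus ?thesis using False by (simp add: rx pP qQ cc c_def)
    qed
    finally have ci: "cinner x (\<rho> x) = cnj a * (a * complex_of_real P + c) + (a * cnj c + complex_of_real Q)" .
    have "Re (cinner x (\<rho> x)) \<ge> 0" using d xl2 unfolding density_op_def psd_op_def by blast
    thus ?thesis unfolding ci a_def quad_calc .
  qed
  have "((cmod c)\<^sup>2)\<^sup>2 \<le> ((cmod c)\<^sup>2 * P) * Q"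
    by (rule quad_real) (use P0 key in auto)
  hence "(cmod c)\<^sup>2 \<le> P * Q"
    using P0 by (cases "cmod c = 0") (auto simp: power2_eq_square)
  thus ?thesis using cc by (simp add: P_def Q_def)
qed


lemma bdd_summ:
  fixes f :: "'a \<Rightarrow> real"
  assumes "\<And>x. f x \<ge> 0" "\<And>F. finite F \<Longrightarrow> sum f F \<le> K"
  shows "f summable_on A"
  by (rule nonneg_bdd_above_summable_on) (use assms in \<open>auto intro!: bdd_aboveI2\<close>)

lemma bdd_infsum:
  fixes f :: "'a \<Rightarrow> real"
  assumes "\<And>x. f x \<ge> 0" "\<And>F. finite F \<Longrightarrow> sum f F \<le> K"
  shows "infsum f A \<le> K"
  by (rule infsum_le_finite_sums[OF bdd_summ[OF assms]]) (use assms in auto)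

lemma dens_tr_summ: "density_op \<rho> \<Longrightarrow> (\<lambda>i. Re (\<rho> (ket i) i)) summable_on UNIV"
  unfolding density_op_def trace_class_pos_def by (simp add: cinner_ket)

lemma dens_tr: "density_op \<rho> \<Longrightarrow> (\<Sum>\<^sub>\<infinity>i. Re (\<rho> (ket i) i)) = 1"
proof -
  assume d: "density_op \<rho>"
  have s: "(\<lambda>i. \<rho> (ket i) i) summable_on UNIV"
    using summable_on_of_real[OF dens_tr_summ[OF d], where 'a=complex] dens_diag_eq[OF d] by simp
  have "(\<Sum>\<^sub>\<infinity>i. Re (\<rho> (ket i) i)) = Re (\<Sum>\<^sub>\<infinity>i. \<rho> (ket i) i)" by (rule infsum_Re[OF s])
  also have "(\<Sum>\<^sub>\<infinity>i. \<rho> (ket i) i) = 1" using d unfolding density_op_def trace_op_def by (simp add: cinner_ket)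
  finally show ?thesis by simp
qed

lemma dens_fin_diag: "density_op \<rho> \<Longrightarrow> finite G \<Longrightarrow> (\<Sum>i\<in>G. Re (\<rho> (ket i) i)) \<le> 1"
  using finite_sum_le_infsum[OF dens_tr_summ, of \<rho> G] dens_tr[of \<rho>] dens_diag[of \<rho>] by auto

lemma dens_hs_fin:
  assumes d: "density_op \<rho>" and F: "finite F"
  shows "(\<Sum>(i,j)\<in>F. (cmod (\<rho> (ket i) j))\<^sup>2) \<le> 1"
proof -
  let ?d = "\<lambda>i. Re (\<rho> (ket i) i)"
  have "(\<Sum>(i,j)\<in>F. (cmod (\<rho> (ket i) j))\<^sup>2) \<le> (\<Sum>(i,j)\<in>fst ` F \<times> snd ` F. (cmod (\<rho> (ket i) j))\<^sup>2)"
    by (rule sum_mono2) (use F in \<open>auto simp: case_prod_beta intro: rev_image_eqI\<close>)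
  also have "\<dots> \<le> (\<Sum>(i,j)\<in>fst ` F \<times> snd ` F. ?d i * ?d j)"
    by (rule sum_mono) (use dens_entry[OF d] in auto)
  also have "\<dots> = (\<Sum>i\<in>fst ` F. ?d i) * (\<Sum>j\<in>snd ` F. ?d j)"
    by (simp add: sum_product sum.cartesian_product)
  also have "\<dots> \<le> 1 * 1"
    by (rule mult_mono) (use dens_fin_diag[OF d] F dens_diag[OF d] in \<open>auto intro: sum_nonneg\<close>)
  finally show ?thesis by simp
qed

lemma dens_hs_summ: "density_op \<rho> \<Longrightarrow> (\<lambda>(i,j). (cmod (\<rho> (ket i) j))\<^sup>2) summable_on A"
  by (rule bdd_summ[where K=1]) (use dens_hs_fin in auto)


lemma closedK: "closed {z::complex. Im z = 0 \<and> Re z \<ge> 0}"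
proof -
  have "{z::complex. Im z = 0 \<and> Re z \<ge> 0} = {z. Im z = 0} \<inter> {z. Re z \<ge> 0}" by auto
  thus ?thesis using closed_halfspace_Im_eq[of 0] closed_halfspace_Re_ge[of 0] by (simp add: closed_Int)
qed

lemma cs_real:
  fixes M A B :: real
  assumes "M \<ge> 0" "A \<ge> 0" "B \<ge> 0" "\<And>t. t > 0 \<Longrightarrow> 2 * M \<le> t * A + B / t"
  shows "M\<^sup>2 \<le> A * B"
proof (cases "M = 0")
  case True thus ?thesis using assms by simp
next
  case False
  hence Mp: "M > 0" using assms by simp
  show ?thesis
  proof (cases "A = 0")
    case True
    show ?thesis
    proof (cases "B = 0")
      case True
      thus ?thesis using assms(4)[of 1] \<open>A = 0\<close> Mp by simp
    next
      case False
      hence Bp: "B > 0" using assms by simp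
      have "2 * M \<le> (2 * B / M) * A + B / (2 * B / M)" using assms(4)[of "2*B/M"] Mp Bp by simp
      hence "2 * M \<le> M / 2" using \<open>A = 0\<close> Bp Mp by (simp add: field_simps)
      thus ?thesis using Mp by simp
    qed
  next
    case False
    hence Ap: "A > 0" using assms by simp
    have "2 * M \<le> (M / A) * A + B / (M / A)" using assms(4)[of "M/A"] Mp Ap by simp
    hence "2 * M \<le> M + A * B / M" using Ap Mp by (simp add: field_simps)
    hence "M \<le> A * B / M" by simp
    hence "M * M \<le> A * B" using Mp by (simp add: field_simps)
    thus ?thesis by (simp add: power2_eq_square)
  qed
qed

lemma amgm_t:
  fixes u v t :: real
  assumes "t > 0"
  shows "2 * (u * v) \<le> t * u\<^sup>2 + v\<^sup>2 / t"
proof -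
  have "0 \<le> (t * u - v)\<^sup>2 / t" using assms by simp
  also have "\<dots> = t * u\<^sup>2 + v\<^sup>2 / t - 2 * (u * v)" using assms
    by (simp add: field_simps power2_eq_square)
  finally show ?thesis by simp
qed

lemma cs_summable:
  fixes f g :: "'a \<Rightarrow> complex"
  assumes f: "(\<lambda>i. (cmod (f i))\<^sup>2) summable_on A" and g: "(\<lambda>i. (cmod (g i))\<^sup>2) summable_on A"
  shows "(\<lambda>i. cmod (f i) * cmod (g i)) summable_on A"
proof (rule summable_on_comparison_test[where f="\<lambda>i. ((cmod (f i))\<^sup>2 + (cmod (g i))\<^sup>2) / 2"])
  show "(\<lambda>i. ((cmod (f i))\<^sup>2 + (cmod (g i))\<^sup>2) / 2) summable_on A"
    using summable_on_cmult_left[OF summable_on_add[OF f g], of "1/2"] by simp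
  fix x show "cmod (f x) * cmod (g x) \<le> ((cmod (f x))\<^sup>2 + (cmod (g x))\<^sup>2) / 2"
    using amgm_t[of 1 "cmod (f x)" "cmod (g x)"] by simp
qed simp

lemma cs_summable_c:
  fixes f g :: "'a \<Rightarrow> complex"
  assumes f: "(\<lambda>i. (cmod (f i))\<^sup>2) summable_on A" and g: "(\<lambda>i. (cmod (g i))\<^sup>2) summable_on A"
  shows "(\<lambda>i. f i * g i) summable_on A"
  unfolding summable_on_iff_abs_summable_on_complex using cs_summable[OF f g] by (simp add: norm_mult)

lemma cs_ineq:
  fixes f g :: "'a \<Rightarrow> complex"
  assumes f: "(\<lambda>i. (cmod (f i))\<^sup>2) summable_on A" and g: "(\<lambda>i. (cmod (g i))\<^sup>2) summable_on A"
  shows "(cmod (\<Sum>\<^sub>\<infinity>i\<in>A. f i * g i))\<^sup>2 \<le> (\<Sum>\<^sub>\<infinity>i\<in>A. (cmod (f i))\<^sup>2) * (\<Sum>\<^sub>\<infinity>i\<in>A. (cmod (g i))\<^sup>2)"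
proof -
  define M where "M = (\<Sum>\<^sub>\<infinity>i\<in>A. cmod (f i) * cmod (g i))"
  have s: "(\<lambda>i. cmod (f i) * cmod (g i)) summable_on A" by (rule cs_summable[OF f g])
  have n: "cmod (\<Sum>\<^sub>\<infinity>i\<in>A. f i * g i) \<le> M"
    unfolding M_def
    using norm_infsum_bound[of "\<lambda>i. f i * g i" A] s by (simp add: norm_mult)
  have "M\<^sup>2 \<le> (\<Sum>\<^sub>\<infinity>i\<in>A. (cmod (f i))\<^sup>2) * (\<Sum>\<^sub>\<infinity>i\<in>A. (cmod (g i))\<^sup>2)"
  proof (rule cs_real)
    show "M \<ge> 0" unfolding M_def by (rule infsum_nonneg) simp
    show "(\<Sum>\<^sub>\<infinity>i\<in>A. (cmod (f i))\<^sup>2) \<ge> 0" "(\<Sum>\<^sub>\<infinity>i\<in>A. (cmod (g i))\<^sup>2) \<ge> 0"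
      by (rule infsum_nonneg, simp)+
    fix t :: real assume t: "t > 0"
    have "2 * M = (\<Sum>\<^sub>\<infinity>i\<in>A. 2 * (cmod (f i) * cmod (g i)))"
      unfolding M_def by (rule infsum_cmult_right[symmetric]) (use s in auto)
    also have "\<dots> \<le> (\<Sum>\<^sub>\<infinity>i\<in>A. t * (cmod (f i))\<^sup>2 + (cmod (g i))\<^sup>2 / t)"
      by (rule infsum_mono) (use s f g amgm_t[OF t] in \<open>auto intro!: summable_on_cmult_right summable_on_add summable_on_cmult_left simp: divide_inverse\<close>)
    also have "\<dots> = t * (\<Sum>\<^sub>\<infinity>i\<in>A. (cmod (f i))\<^sup>2) + (\<Sum>\<^sub>\<infinity>i\<in>A. (cmod (g i))\<^sup>2) / t"
    proof -
      have a: "(\<lambda>i. t * (cmod (f i))\<^sup>2) summable_on A" by (rule summable_on_cmult_right[OF f])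
      have b: "(\<lambda>i. (cmod (g i))\<^sup>2 * inverse t) summable_on A" by (rule summable_on_cmult_left[OF g])
      have "(\<Sum>\<^sub>\<infinity>i\<in>A. t * (cmod (f i))\<^sup>2 + (cmod (g i))\<^sup>2 / t)
          = (\<Sum>\<^sub>\<infinity>i\<in>A. t * (cmod (f i))\<^sup>2 + (cmod (g i))\<^sup>2 * inverse t)" by (simp add: divide_inverse)
      also have "\<dots> = (\<Sum>\<^sub>\<infinity>i\<in>A. t * (cmod (f i))\<^sup>2) + (\<Sum>\<^sub>\<infinity>i\<in>A. (cmod (g i))\<^sup>2 * inverse t)"
        by (rule infsum_add[OF a b])
      also have "\<dots> = t * (\<Sum>\<^sub>\<infinity>i\<in>A. (cmod (f i))\<^sup>2) + (\<Sum>\<^sub>\<infinity>i\<in>A. (cmod (g i))\<^sup>2) * inverse t"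
        using f g by (simp add: infsum_cmult_right infsum_cmult_left)
      finally show ?thesis by (simp add: divide_inverse)
    qed
    finally show "2 * M \<le> t * (\<Sum>\<^sub>\<infinity>i\<in>A. (cmod (f i))\<^sup>2) + (\<Sum>\<^sub>\<infinity>i\<in>A. (cmod (g i))\<^sup>2) / t" .
  qed
  moreover have "(cmod (\<Sum>\<^sub>\<infinity>i\<in>A. f i * g i))\<^sup>2 \<le> M\<^sup>2" using n by (simp add: power_mono)
  ultimately show ?thesis by linarith
qed


lemma ket_inj: "inj ket"
proof (rule injI)
  fix i j :: 'a assume "ket i = ket j"
  hence "ket i i = ket j i" by simp
  thus "i = j" by (simp add: ket_def split: if_splits)
qed

lemma fin_level:
  fixes Ev :: "'i::countable \<Rightarrow> real"
  assumes unb: "no_bounded_inf_subspace Ev" and pos: "\<forall>i. Ev i \<ge> 0"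
  shows "finite {i. Ev i \<le> C}"
proof (rule ccontr)
  define L where "L = {i. Ev i \<le> C}"
  assume "\<not> finite {i. Ev i \<le> C}"
  hence infL: "infinite L" unfolding L_def .
  then obtain i0 where "i0 \<in> L" by (metis ex_in_conv finite.emptyI)
  hence C0: "C \<ge> 0" using pos unfolding L_def by (smt (verit) mem_Collect_eq)
  define V where "V = {x \<in> l2. \<forall>k. k \<notin> L \<longrightarrow> x k = 0}"
  have sub: "csubspace_l2 V"
    unfolding csubspace_l2_def V_def
    by (auto intro: l2_fin[of "{}"] l2_add l2_scale)
  have bnd: "(Ev i * cmod (x i))\<^sup>2 \<le> C\<^sup>2 * (cmod (x i))\<^sup>2" if "x \<in> V" for x i
  proof (cases "i \<in> L")
    case True
    hence "Ev i * cmod (x i) \<le> C * cmod (x i)" using pos unfolding L_def by (simp add: mult_right_mono)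
    moreover have "0 \<le> Ev i * cmod (x i)" using pos by simp
    ultimately have "(Ev i * cmod (x i))\<^sup>2 \<le> (C * cmod (x i))\<^sup>2" by (rule power_mono)
    thus ?thesis by (simp add: power_mult_distrib)
  next
    case False thus ?thesis using that unfolding V_def by simp
  qed
  have summ: "(\<lambda>i. (Ev i * cmod (x i))\<^sup>2) summable_on UNIV" if "x \<in> V" for x
    by (rule summable_on_comparison_test[where f="\<lambda>i. C\<^sup>2 * (cmod (x i))\<^sup>2"])
       (use that bnd in \<open>auto simp: V_def l2_def intro!: summable_on_cmult_right\<close>)
  have hd: "V \<subseteq> hdom Ev" unfolding hdom_def using summ by (auto simp: V_def)
  have indim: "infinite_dim V"
    unfolding infinite_dim_def
  proof (intro exI conjI)
    show "ket ` L \<subseteq> V" unfolding V_def using ket_l2 by (auto simp: ket_def)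
    show "infinite (ket ` L)" using infL finite_imageD[of ket L] ket_inj by (auto simp: inj_on_def inj_def)
    show "cindependent (ket ` L)"
      unfolding cindependent_def
    proof (intro allI impI ballI)
      fix F c v
      assume h: "finite F \<and> F \<subseteq> ket ` L \<and> (\<lambda>j. \<Sum>v\<in>F. c v * v j) = (\<lambda>j. 0)" and v: "v \<in> F"
      then obtain k where vk: "v = ket k" by auto
      have "(\<Sum>w\<in>F. c w * w k) = 0" using h by metis
      moreover have "(\<Sum>w\<in>F. c w * w k) = c v * v k + (\<Sum>w\<in>F - {v}. c w * w k)"
        using h v by (simp add: sum.remove)
      moreover have "(\<Sum>w\<in>F - {v}. c w * w k) = 0"
      proof (rule sum.neutral, rule ballI)
        fix w assume w: "w \<in> F - {v}"
        then obtain k' where "w = ket k'" using h by auto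
        hence "k' \<noteq> k" using w vk by auto
        thus "c w * w k = 0" using \<open>w = ket k'\<close> by (simp add: ket_def)
      qed
      ultimately show "c v = 0" using vk by (simp add: ket_def)
    qed
  qed
  have "\<exists>C. \<forall>x\<in>V. l2norm (hop Ev x) \<le> C * l2norm x"
  proof (intro exI ballI)
    fix x assume x: "x \<in> V"
    have "(\<Sum>\<^sub>\<infinity>i. (cmod (hop Ev x i))\<^sup>2) = (\<Sum>\<^sub>\<infinity>i. (Ev i * cmod (x i))\<^sup>2)"
      using pos by (simp add: hop_def norm_mult)
    also have "\<dots> \<le> (\<Sum>\<^sub>\<infinity>i. C\<^sup>2 * (cmod (x i))\<^sup>2)"
      by (rule infsum_mono) (use x summ bnd in \<open>auto simp: V_def l2_def intro!: summable_on_cmult_right\<close>)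
    also have "\<dots> = C\<^sup>2 * (\<Sum>\<^sub>\<infinity>i. (cmod (x i))\<^sup>2)" by (rule infsum_cmult_right') 
    finally have "sqrt (\<Sum>\<^sub>\<infinity>i. (cmod (hop Ev x i))\<^sup>2) \<le> sqrt (C\<^sup>2 * (\<Sum>\<^sub>\<infinity>i. (cmod (x i))\<^sup>2))"
      by (rule real_sqrt_le_mono)
    thus "l2norm (hop Ev x) \<le> C * l2norm x"
      unfolding l2norm_def using C0 by (simp add: real_sqrt_mult)
  qed
  thus False using unb sub hd indim unfolding no_bounded_inf_subspace_def by blast
qed


lemma dens_lin_fin:
  assumes d: "density_op \<rho>" and F: "finite F"
  shows "\<rho> (\<lambda>k. \<Sum>i\<in>F. c i * ket i k) = (\<lambda>j. \<Sum>i\<in>F. c i * \<rho> (ket i) j)"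
  using F
proof (induction F rule: finite_induct)
  case empty
  have "\<rho> (\<lambda>j. 0 * ket undefined j) = (\<lambda>j. 0 * \<rho> (ket undefined) j)" by (rule dens_scale[OF d ket_l2])
  thus ?case by simp
next
  case (insert a F)
  have l1: "(\<lambda>k. c a * ket a k) \<in> l2" by (rule l2_scale[OF ket_l2])
  have l2': "(\<lambda>k. \<Sum>i\<in>F. c i * ket i k) \<in> l2"
    by (rule l2_fin[OF insert(1)]) (auto simp: ket_def intro!: sum.neutral)
  have "\<rho> (\<lambda>k. \<Sum>i\<in>insert a F. c i * ket i k) = \<rho> (\<lambda>k. c a * ket a k + (\<Sum>i\<in>F. c i * ket i k))"
    using insert by simp
  also have "\<dots> = (\<lambda>j. \<rho> (\<lambda>k. c a * ket a k) j + \<rho> (\<lambda>k. \<Sum>i\<in>F. c i * ket i k) j)"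
    by (rule dens_add[OF d l1 l2'])
  also have "\<dots> = (\<lambda>j. c a * \<rho> (ket a) j + (\<Sum>i\<in>F. c i * \<rho> (ket i) j))"
    using dens_scale[OF d ket_l2[of a], of "c a"] insert.IH by simp
  also have "\<dots> = (\<lambda>j. \<Sum>i\<in>insert a F. c i * \<rho> (ket i) j)" using insert by simp
  finally show ?case .
qed

lemma tight:
  assumes d: "density_op \<rho>" and en: "energy_bounded Ev E \<rho>" and pos: "\<forall>i. Ev i \<ge> 0"
    and C: "C > 0" and L: "finite {i. Ev i \<le> C}"
  shows "(\<Sum>i\<in>{i. Ev i \<le> C}. Re (\<rho> (ket i) i)) \<ge> 1 - E / C"
proof -
  define L where "L = {i. Ev i \<le> C}"
  let ?D = "\<lambda>i. Re (\<rho> (ket i) i)"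
  have sD: "?D summable_on UNIV" by (rule dens_tr_summ[OF d])
  have sE: "(\<lambda>i. ?D i * Ev i) summable_on UNIV" using en unfolding energy_bounded_def by (simp add: cinner_ket)
  have iE: "(\<Sum>\<^sub>\<infinity>i. ?D i * Ev i) \<le> E" using en unfolding energy_bounded_def by (simp add: cinner_ket)
  have "1 = (\<Sum>\<^sub>\<infinity>i\<in>L \<union> (-L). ?D i)" using dens_tr[OF d] by simp
  also have "\<dots> = (\<Sum>\<^sub>\<infinity>i\<in>L. ?D i) + (\<Sum>\<^sub>\<infinity>i\<in>-L. ?D i)"
    by (rule infsum_Un_disjoint) (auto intro: summable_on_subset_banach[OF sD])
  also have "(\<Sum>\<^sub>\<infinity>i\<in>L. ?D i) = (\<Sum>i\<in>L. ?D i)" using L unfolding L_def by simp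
  also have "(\<Sum>\<^sub>\<infinity>i\<in>-L. ?D i) \<le> (\<Sum>\<^sub>\<infinity>i\<in>-L. (?D i * Ev i) * inverse C)"
  proof (rule infsum_mono)
    show "?D summable_on -L" by (rule summable_on_subset_banach[OF sD]) auto
    show "(\<lambda>i. (?D i * Ev i) * inverse C) summable_on -L"
      by (rule summable_on_cmult_left, rule summable_on_subset_banach[OF sE]) auto
    fix i assume "i \<in> -L"
    hence "Ev i > C" unfolding L_def by auto
    hence "?D i * C \<le> ?D i * Ev i" using dens_diag[OF d, of i] by (simp add: mult_left_mono)
    thus "?D i \<le> (?D i * Ev i) * inverse C" using C by (simp add: field_simps)
  qed
  also have "\<dots> = (\<Sum>\<^sub>\<infinity>i\<in>-L. ?D i * Ev i) * inverse C" by (rule infsum_cmult_left')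
  also have "(\<Sum>\<^sub>\<infinity>i\<in>-L. ?D i * Ev i) \<le> (\<Sum>\<^sub>\<infinity>i. ?D i * Ev i)"
    by (rule infsum_mono_neutral) (use sE pos dens_diag[OF d] in \<open>auto intro: summable_on_subset_banach[OF sE]\<close>)
  finally have "1 \<le> (\<Sum>i\<in>L. ?D i) + (\<Sum>\<^sub>\<infinity>i. ?D i * Ev i) * inverse C"
    using C by (simp add: mult_right_mono)
  moreover have "(\<Sum>\<^sub>\<infinity>i. ?D i * Ev i) * inverse C \<le> E * inverse C"
    using iE C by (simp add: mult_right_mono)
  ultimately show ?thesis unfolding L_def by (simp add: divide_inverse)
qed


lemma prod_summ:
  fixes f g :: "'a \<Rightarrow> real"
  assumes f: "f summable_on UNIV" and g: "g summable_on UNIV" and "\<And>x. f x \<ge> 0" "\<And>x. g x \<ge> 0"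
  shows "(\<lambda>(j,i). f j * g i) summable_on UNIV"
proof (rule bdd_summ[where K="infsum f UNIV * infsum g UNIV"])
  show "(case x of (j,i) \<Rightarrow> f j * g i) \<ge> 0" for x using assms by (auto simp: case_prod_beta)
  fix F :: "('a \<times> 'a) set" assume F: "finite F"
  have "(\<Sum>x\<in>F. case x of (j,i) \<Rightarrow> f j * g i) \<le> (\<Sum>x\<in>fst ` F \<times> snd ` F. case x of (j,i) \<Rightarrow> f j * g i)"
    by (rule sum_mono2) (use F assms in \<open>auto simp: case_prod_beta intro: rev_image_eqI\<close>)
  also have "\<dots> = (\<Sum>j\<in>fst ` F. f j) * (\<Sum>i\<in>snd ` F. g i)"
    by (simp add: sum_product sum.cartesian_product)
  also have "\<dots> \<le> infsum f UNIV * infsum g UNIV"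
    by (rule mult_mono) (use F assms in \<open>auto intro!: finite_sum_le_infsum sum_nonneg infsum_nonneg\<close>)
  finally show "(\<Sum>x\<in>F. case x of (j,i) \<Rightarrow> f j * g i) \<le> infsum f UNIV * infsum g UNIV" .
qed

locale setting =
  fixes Ev :: "'i::countable \<Rightarrow> real" and E :: real
    and \<rho> :: "nat \<Rightarrow> ('i \<Rightarrow> complex) \<Rightarrow> ('i \<Rightarrow> complex)"
  assumes pos: "\<forall>i. Ev i \<ge> 0"
    and unb: "no_bounded_inf_subspace Ev"
    and Epos: "E > 0"
    and inP: "\<forall>n. \<rho> n \<in> Pset Ev E"
    and cauchy: "\<forall>\<epsilon>>0. \<exists>N. \<forall>m\<ge>N. \<forall>n\<ge>N. hs_norm (\<lambda>x. \<rho> m x - \<rho> n x) < \<epsilon>"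
begin

lemma d: "density_op (\<rho> n)" using inP by (simp add: Pset_def)
lemma en: "energy_bounded Ev E (\<rho> n)" using inP by (simp add: Pset_def)

lemma diff_summ: "(\<lambda>(i,j). (cmod (\<rho> m (ket i) j - \<rho> n (ket i) j))\<^sup>2) summable_on UNIV"
proof (rule summable_on_comparison_test[where f="\<lambda>(i,j). 2 * (cmod (\<rho> m (ket i) j))\<^sup>2 + 2 * (cmod (\<rho> n (ket i) j))\<^sup>2"])
  show "(\<lambda>(i,j). 2 * (cmod (\<rho> m (ket i) j))\<^sup>2 + 2 * (cmod (\<rho> n (ket i) j))\<^sup>2) summable_on UNIV"
    using summable_on_add[OF summable_on_cmult_right[OF dens_hs_summ[OF d[of m]], of 2]
                              summable_on_cmult_right[OF dens_hs_summ[OF d[of n]], of 2]]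
    by (simp add: case_prod_unfold)
next
  fix x :: "'i \<times> 'i"
  show "(case x of (i,j) \<Rightarrow> (cmod (\<rho> m (ket i) j - \<rho> n (ket i) j))\<^sup>2) \<le> (case x of (i,j) \<Rightarrow> 2 * (cmod (\<rho> m (ket i) j))\<^sup>2 + 2 * (cmod (\<rho> n (ket i) j))\<^sup>2)"
    by (cases x) (simp add: sq_diff_le)
  show "0 \<le> (case x of (i,j) \<Rightarrow> (cmod (\<rho> m (ket i) j - \<rho> n (ket i) j))\<^sup>2)" by (cases x) simp
qed

lemma hs_diff: "(hs_norm (\<lambda>x. \<rho> m x - \<rho> n x))\<^sup>2 = (\<Sum>\<^sub>\<infinity>(i,j). (cmod (\<rho> m (ket i) j - \<rho> n (ket i) j))\<^sup>2)"
  using hs_norm_prod[of "\<lambda>x. \<rho> m x - \<rho> n x"] diff_summ[of m n] by simp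

lemma fin_cauchy: "finite F \<Longrightarrow> (\<Sum>(i,j)\<in>F. (cmod (\<rho> m (ket i) j - \<rho> n (ket i) j))\<^sup>2) \<le> (hs_norm (\<lambda>x. \<rho> m x - \<rho> n x))\<^sup>2"
  unfolding hs_diff by (rule finite_sum_le_infsum[OF diff_summ]) (auto simp: case_prod_beta)

lemma cauchy2: "\<epsilon> > 0 \<Longrightarrow> \<exists>N. \<forall>m\<ge>N. \<forall>n\<ge>N. \<forall>F. finite F \<longrightarrow> (\<Sum>(i,j)\<in>F. (cmod (\<rho> m (ket i) j - \<rho> n (ket i) j))\<^sup>2) \<le> \<epsilon>\<^sup>2"
proof -
  assume e: "\<epsilon> > 0"
  obtain N where N: "\<forall>m\<ge>N. \<forall>n\<ge>N. hs_norm (\<lambda>x. \<rho> m x - \<rho> n x) < \<epsilon>" using cauchy e by blast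
  have "(hs_norm (\<lambda>x. \<rho> m x - \<rho> n x))\<^sup>2 \<le> \<epsilon>\<^sup>2" if "m \<ge> N" "n \<ge> N" for m n
    using N that by (intro power_mono) (auto simp: hs_norm_def infsum_nonneg less_imp_le)
  thus ?thesis using fin_cauchy by (meson order_trans)
qed

lemma entry_conv: "convergent (\<lambda>n. \<rho> n (ket i) j)"
proof (rule Cauchy_convergent, unfold Cauchy_def, intro allI impI)
  fix e :: real assume e: "e > 0"
  obtain N where N: "\<forall>m\<ge>N. \<forall>n\<ge>N. \<forall>F. finite F \<longrightarrow> (\<Sum>(i,j)\<in>F. (cmod (\<rho> m (ket i) j - \<rho> n (ket i) j))\<^sup>2) \<le> (e/2)\<^sup>2"
    using cauchy2[of "e/2"] half_gt_zero[OF e] by blast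
  show "\<exists>M. \<forall>m\<ge>M. \<forall>n\<ge>M. dist (\<rho> m (ket i) j) (\<rho> n (ket i) j) < e"
  proof (intro exI allI impI)
    fix m n assume "m \<ge> N" "n \<ge> N"
    hence "(\<Sum>(i,j)\<in>{(i,j)}. (cmod (\<rho> m (ket i) j - \<rho> n (ket i) j))\<^sup>2) \<le> (e/2)\<^sup>2"
      using N by blast
    hence "(cmod (\<rho> m (ket i) j - \<rho> n (ket i) j))\<^sup>2 \<le> (e/2)\<^sup>2" by simp
    hence "cmod (\<rho> m (ket i) j - \<rho> n (ket i) j) \<le> e/2"
      by (rule power2_le_imp_le) (use e in simp)
    thus "dist (\<rho> m (ket i) j) (\<rho> n (ket i) j) < e" using e by (simp add: dist_norm)
  qed
qed

definition s :: "'i \<Rightarrow> 'i \<Rightarrow> complex" where "s i j = lim (\<lambda>n. \<rho> n (ket i) j)"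

lemma s_lim: "(\<lambda>n. \<rho> n (ket i) j) \<longlonglongrightarrow> s i j"
  unfolding s_def using entry_conv convergent_LIMSEQ_iff by blast


lemma s_fin: "finite F \<Longrightarrow> (\<Sum>(i,j)\<in>F. (cmod (s i j))\<^sup>2) \<le> 1"
proof -
  assume F: "finite F"
  have "(\<lambda>n. \<Sum>(i,j)\<in>F. (cmod (\<rho> n (ket i) j))\<^sup>2) \<longlonglongrightarrow> (\<Sum>(i,j)\<in>F. (cmod (s i j))\<^sup>2)"
    unfolding case_prod_unfold by (intro tendsto_intros s_lim)
  moreover have "\<forall>n. (\<Sum>(i,j)\<in>F. (cmod (\<rho> n (ket i) j))\<^sup>2) \<le> 1" using dens_hs_fin[OF d F] by blast
  ultimately show ?thesis by (meson LIMSEQ_le_const2)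
qed

lemma s_summ: "(\<lambda>(i,j). (cmod (s i j))\<^sup>2) summable_on A"
  by (rule bdd_summ[where K=1]) (use s_fin in auto)

lemma tail: "\<epsilon> > 0 \<Longrightarrow> \<exists>N. \<forall>n\<ge>N. \<forall>F. finite F \<longrightarrow> (\<Sum>(i,j)\<in>F. (cmod (\<rho> n (ket i) j - s i j))\<^sup>2) \<le> \<epsilon>\<^sup>2"
proof -
  assume e: "\<epsilon> > 0"
  obtain N where N: "\<forall>m\<ge>N. \<forall>n\<ge>N. \<forall>F. finite F \<longrightarrow> (\<Sum>(i,j)\<in>F. (cmod (\<rho> m (ket i) j - \<rho> n (ket i) j))\<^sup>2) \<le> \<epsilon>\<^sup>2"
    using cauchy2[OF e] by blast
  have "(\<Sum>(i,j)\<in>F. (cmod (\<rho> n (ket i) j - s i j))\<^sup>2) \<le> \<epsilon>\<^sup>2" if n: "n \<ge> N" and F: "finite F" for n F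
  proof -
    have "(\<lambda>m. \<Sum>(i,j)\<in>F. (cmod (\<rho> m (ket i) j - \<rho> n (ket i) j))\<^sup>2) \<longlonglongrightarrow> (\<Sum>(i,j)\<in>F. (cmod (s i j - \<rho> n (ket i) j))\<^sup>2)"
      unfolding case_prod_unfold by (intro tendsto_intros s_lim)
    moreover have "\<exists>M. \<forall>m\<ge>M. (\<Sum>(i,j)\<in>F. (cmod (\<rho> m (ket i) j - \<rho> n (ket i) j))\<^sup>2) \<le> \<epsilon>\<^sup>2"
      using N n F by blast
    ultimately have "(\<Sum>(i,j)\<in>F. (cmod (s i j - \<rho> n (ket i) j))\<^sup>2) \<le> \<epsilon>\<^sup>2" by (rule LIMSEQ_le_const2)
    thus ?thesis by (simp add: norm_minus_commute)
  qed
  thus ?thesis by blast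
qed

definition \<sigma> :: "('i \<Rightarrow> complex) \<Rightarrow> ('i \<Rightarrow> complex)" where
  "\<sigma> x = (\<lambda>j. \<Sum>\<^sub>\<infinity>i. s i j * x i)"

lemma \<sigma>_ket: "\<sigma> (ket i) j = s i j"
  unfolding \<sigma>_def
  by (subst infsum_cong_neutral[where T="{i}" and g="\<lambda>k. s k j * ket i k"]) (auto simp: ket_def)

lemma row_summ: "(\<lambda>i. (cmod (s i j))\<^sup>2) summable_on UNIV"
proof (rule bdd_summ[where K=1])
  fix G :: "'i set" assume G: "finite G"
  have "(\<Sum>i\<in>G. (cmod (s i j))\<^sup>2) = (\<Sum>(i,j')\<in>(\<lambda>i. (i,j)) ` G. (cmod (s i j'))\<^sup>2)"
    by (subst sum.reindex) (auto simp: inj_on_def)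
  also have "\<dots> \<le> 1" using s_fin G by blast
  finally show "(\<Sum>i\<in>G. (cmod (s i j))\<^sup>2) \<le> 1" .
qed simp

definition R :: "'i \<Rightarrow> real" where "R j = (\<Sum>\<^sub>\<infinity>i. (cmod (s i j))\<^sup>2)"

lemma swap_summ: "(\<lambda>(j,i). (cmod (s i j))\<^sup>2) summable_on UNIV"
  using s_summ[of UNIV] summable_on_swap[of "\<lambda>(i,j). (cmod (s i j))\<^sup>2" UNIV UNIV] by simp

lemma R_summ: "R summable_on UNIV"
  unfolding R_def
  using summable_on_SigmaD[of "\<lambda>(j,i). (cmod (s i j))\<^sup>2" UNIV "\<lambda>_. UNIV"] swap_summ row_summ by simp

lemma R_le: "(\<Sum>\<^sub>\<infinity>j. R j) \<le> 1"
proof -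
  have "(\<Sum>\<^sub>\<infinity>j. R j) = (\<Sum>\<^sub>\<infinity>(j,i). (cmod (s i j))\<^sup>2)"
    unfolding R_def using infsum_Sigma_banach[of "\<lambda>(j,i). (cmod (s i j))\<^sup>2" UNIV "\<lambda>_. UNIV"] swap_summ by simp
  also have "\<dots> \<le> 1"
  proof (rule infsum_le_finite_sums[OF swap_summ])
    fix F :: "('i \<times> 'i) set" assume F: "finite F"
    have "(\<Sum>(j,i)\<in>F. (cmod (s i j))\<^sup>2) = (\<Sum>(i,j)\<in>prod.swap ` F. (cmod (s i j))\<^sup>2)"
      by (subst sum.reindex) (auto simp: case_prod_unfold)
    also have "\<dots> \<le> 1" using s_fin F by blast
    finally show "(\<Sum>(j,i)\<in>F. (cmod (s i j))\<^sup>2) \<le> 1" .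
  qed
  finally show ?thesis .
qed

lemma R_nonneg: "R j \<ge> 0" unfolding R_def by (rule infsum_nonneg) simp

lemma \<sigma>_entry: "x \<in> l2 \<Longrightarrow> (cmod (\<sigma> x j))\<^sup>2 \<le> R j * (\<Sum>\<^sub>\<infinity>i. (cmod (x i))\<^sup>2)"
  unfolding \<sigma>_def R_def by (rule cs_ineq[OF row_summ l2_memD])

lemma \<sigma>_l2: "x \<in> l2 \<Longrightarrow> \<sigma> x \<in> l2"
proof -
  assume x: "x \<in> l2"
  show ?thesis unfolding l2_def mem_Collect_eq
    by (rule summable_on_comparison_test[OF summable_on_cmult_left[OF R_summ, of "\<Sum>\<^sub>\<infinity>i. (cmod (x i))\<^sup>2"]])
       (use \<sigma>_entry[OF x] in auto)
qed

lemma \<sigma>_norm: "x \<in> l2 \<Longrightarrow> l2norm (\<sigma> x) \<le> l2norm x"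
proof -
  assume x: "x \<in> l2"
  have "(\<Sum>\<^sub>\<infinity>j. (cmod (\<sigma> x j))\<^sup>2) \<le> (\<Sum>\<^sub>\<infinity>j. R j * (\<Sum>\<^sub>\<infinity>i. (cmod (x i))\<^sup>2))"
    by (rule infsum_mono[OF l2_memD[OF \<sigma>_l2[OF x]] summable_on_cmult_left[OF R_summ]]) (rule \<sigma>_entry[OF x])
  also have "\<dots> = (\<Sum>\<^sub>\<infinity>j. R j) * (\<Sum>\<^sub>\<infinity>i. (cmod (x i))\<^sup>2)" by (rule infsum_cmult_left')
  also have "\<dots> \<le> 1 * (\<Sum>\<^sub>\<infinity>i. (cmod (x i))\<^sup>2)"
    by (rule mult_right_mono[OF R_le]) (rule infsum_nonneg, simp)
  finally show ?thesis unfolding l2norm_def by simp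
qed

lemma \<sigma>_add: "x \<in> l2 \<Longrightarrow> y \<in> l2 \<Longrightarrow> \<sigma> (\<lambda>j. x j + y j) = (\<lambda>j. \<sigma> x j + \<sigma> y j)"
proof (rule ext)
  fix j assume x: "x \<in> l2" and y: "y \<in> l2"
  have sx: "(\<lambda>i. s i j * x i) summable_on UNIV" by (rule cs_summable_c[OF row_summ l2_memD[OF x]])
  have sy: "(\<lambda>i. s i j * y i) summable_on UNIV" by (rule cs_summable_c[OF row_summ l2_memD[OF y]])
  show "\<sigma> (\<lambda>j. x j + y j) j = \<sigma> x j + \<sigma> y j"
    unfolding \<sigma>_def using infsum_add[OF sx sy] by (simp add: distrib_left)
qed

lemma \<sigma>_scale: "\<sigma> (\<lambda>j. c * x j) = (\<lambda>j. c * \<sigma> x j)"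
proof (rule ext)
  fix j
  have "(\<Sum>\<^sub>\<infinity>i. s i j * (c * x i)) = (\<Sum>\<^sub>\<infinity>i. c * (s i j * x i))" by (simp add: algebra_simps)
  also have "\<dots> = c * (\<Sum>\<^sub>\<infinity>i. s i j * x i)" by (rule infsum_cmult_right')
  finally show "\<sigma> (\<lambda>j. c * x j) j = c * \<sigma> x j" unfolding \<sigma>_def .
qed

lemma \<sigma>_bounded: "bounded_op \<sigma>"
  unfolding bounded_op_def using \<sigma>_l2 \<sigma>_add \<sigma>_scale \<sigma>_norm by (metis mult_1)


lemma s_herm: "s i j = cnj (s j i)"
proof -
  have "(\<lambda>n. cnj (\<rho> n (ket j) i)) \<longlonglongrightarrow> cnj (s j i)"
    by (rule tendsto_cnj[OF s_lim])
  hence "(\<lambda>n. \<rho> n (ket i) j) \<longlonglongrightarrow> cnj (s j i)"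
    by (subst dens_herm[OF d]) 
  thus ?thesis using s_lim[of i j] by (rule LIMSEQ_unique[rotated])
qed

lemma pair_summ:
  assumes x: "x \<in> l2" and y: "y \<in> l2"
  shows "(\<lambda>(j,i). cnj (x j) * s i j * y i) summable_on UNIV"
proof -
  have xy: "(\<lambda>(j,i). (cmod (x j))\<^sup>2 * (cmod (y i))\<^sup>2) summable_on UNIV"
    by (rule prod_summ[OF l2_memD[OF x] l2_memD[OF y]]) simp_all
  have b: "(\<lambda>p. ((case p of (j,i) \<Rightarrow> (cmod (s i j))\<^sup>2) + (case p of (j,i) \<Rightarrow> (cmod (x j))\<^sup>2 * (cmod (y i))\<^sup>2)) * (1/2)) summable_on UNIV"
    by (rule summable_on_cmult_left[OF summable_on_add[OF swap_summ xy]])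
  have "(\<lambda>(j,i). cmod (cnj (x j) * s i j * y i)) summable_on UNIV"
  proof (rule summable_on_comparison_test[OF b])
    fix p :: "'i \<times> 'i"
    obtain j i where p: "p = (j,i)" by (cases p)
    have "2 * (cmod (s i j) * (cmod (x j) * cmod (y i))) \<le> 1 * (cmod (s i j))\<^sup>2 + (cmod (x j) * cmod (y i))\<^sup>2 / 1"
      by (rule amgm_t) simp
    hence "cmod (s i j) * (cmod (x j) * cmod (y i)) \<le> ((cmod (s i j))\<^sup>2 + (cmod (x j))\<^sup>2 * (cmod (y i))\<^sup>2) * (1/2)"
      by (simp add: power_mult_distrib)
    moreover have "cmod (cnj (x j) * s i j * y i) = cmod (s i j) * (cmod (x j) * cmod (y i))"
      by (simp add: norm_mult)
    ultimately show "(case p of (j,i) \<Rightarrow> cmod (cnj (x j) * s i j * y i)) \<le> ((case p of (j,i) \<Rightarrow> (cmod (s i j))\<^sup>2) + (case p of (j,i) \<Rightarrow> (cmod (x j))\<^sup>2 * (cmod (y i))\<^sup>2)) * (1/2)"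
      unfolding p by simp
    show "0 \<le> (case p of (j,i) \<Rightarrow> cmod (cnj (x j) * s i j * y i))" unfolding p by simp
  qed
  thus ?thesis unfolding summable_on_iff_abs_summable_on_complex by (simp add: case_prod_unfold)
qed

lemma cinner_\<sigma>: "cinner x (\<sigma> y) = (\<Sum>\<^sub>\<infinity>j. \<Sum>\<^sub>\<infinity>i. cnj (x j) * s i j * y i)"
proof -
  have "cinner x (\<sigma> y) = (\<Sum>\<^sub>\<infinity>j. cnj (x j) * (\<Sum>\<^sub>\<infinity>i. s i j * y i))" unfolding cinner_def \<sigma>_def ..
  also have "\<dots> = (\<Sum>\<^sub>\<infinity>j. \<Sum>\<^sub>\<infinity>i. cnj (x j) * (s i j * y i))" by (simp only: infsum_cmult_right')
  finally show ?thesis by (simp add: mult.assoc)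
qed

lemma \<sigma>_cinner: "cinner (\<sigma> x) y = (\<Sum>\<^sub>\<infinity>j. \<Sum>\<^sub>\<infinity>i. cnj (x i) * s j i * y j)"
proof -
  have "cinner (\<sigma> x) y = (\<Sum>\<^sub>\<infinity>j. cnj (\<Sum>\<^sub>\<infinity>i. s i j * x i) * y j)" unfolding cinner_def \<sigma>_def ..
  also have "\<dots> = (\<Sum>\<^sub>\<infinity>j. (\<Sum>\<^sub>\<infinity>i. cnj (s i j * x i)) * y j)" by (simp only: infsum_cnj)
  also have "\<dots> = (\<Sum>\<^sub>\<infinity>j. \<Sum>\<^sub>\<infinity>i. cnj (s i j * x i) * y j)" by (simp only: infsum_cmult_left')
  also have "\<dots> = (\<Sum>\<^sub>\<infinity>j. \<Sum>\<^sub>\<infinity>i. cnj (x i) * s j i * y j)"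
  proof -
    have "cnj (s i j * x i) * y j = cnj (x i) * s j i * y j" for i j
    proof -
      have h: "s j i = cnj (s i j)" by (rule s_herm)
      show ?thesis unfolding h complex_cnj_mult by (simp only: mult.commute mult.left_commute)
    qed
    thus ?thesis by (simp only:)
  qed
  finally show ?thesis .
qed

lemma \<sigma>_herm: "hermitian_op \<sigma>"
  unfolding hermitian_op_def
proof (intro ballI)
  fix x y :: "'i \<Rightarrow> complex" assume x: "x \<in> l2" and y: "y \<in> l2"
  have "(\<Sum>\<^sub>\<infinity>j. \<Sum>\<^sub>\<infinity>i. cnj (x j) * s i j * y i) = (\<Sum>\<^sub>\<infinity>i. \<Sum>\<^sub>\<infinity>j. cnj (x j) * s i j * y i)"
    by (rule infsum_swap_banach) (use pair_summ[OF x y] in simp)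
  thus "cinner x (\<sigma> y) = cinner (\<sigma> x) y" unfolding cinner_\<sigma> \<sigma>_cinner .
qed


lemma fin_quad_K:
  assumes F: "finite F"
  shows "(\<Sum>(j,i)\<in>F\<times>F. cnj (x j) * \<rho> n (ket i) j * x i) \<in> {z. Im z = 0 \<and> Re z \<ge> 0}"
proof -
  define xF where "xF = (\<lambda>k. \<Sum>i\<in>F. x i * ket i k)"
  have xF_eq: "xF k = (if k \<in> F then x k else 0)" for k
    unfolding xF_def ket_def using F by (simp add: if_distrib[of "\<lambda>t. x _ * t"] cong: if_cong)
  have xl2: "xF \<in> l2" by (rule l2_fin[OF F]) (simp add: xF_eq)
  have rx: "\<rho> n xF = (\<lambda>j. \<Sum>i\<in>F. x i * \<rho> n (ket i) j)"
    unfolding xF_def by (rule dens_lin_fin[OF d F])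
  have "cinner xF (\<rho> n xF) = (\<Sum>j\<in>F. cnj (xF j) * \<rho> n xF j)"
    by (rule cinner_fin[OF F]) (simp add: xF_eq)
  also have "\<dots> = (\<Sum>j\<in>F. cnj (x j) * (\<Sum>i\<in>F. x i * \<rho> n (ket i) j))"
    by (rule sum.cong) (simp_all add: xF_eq rx)
  also have "\<dots> = (\<Sum>j\<in>F. \<Sum>i\<in>F. cnj (x j) * \<rho> n (ket i) j * x i)"
    by (simp add: sum_distrib_left mult.commute mult.left_commute)
  also have "\<dots> = (\<Sum>(j,i)\<in>F\<times>F. cnj (x j) * \<rho> n (ket i) j * x i)"
    by (rule sum.cartesian_product)
  finally have eq: "cinner xF (\<rho> n xF) = (\<Sum>(j,i)\<in>F\<times>F. cnj (x j) * \<rho> n (ket i) j * x i)" .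
  have "Im (cinner xF (\<rho> n xF)) = 0 \<and> Re (cinner xF (\<rho> n xF)) \<ge> 0"
    using d[of n] xl2 unfolding density_op_def psd_op_def by blast
  thus ?thesis unfolding eq by simp
qed

lemma fin_quad_K_lim:
  assumes F: "finite F"
  shows "(\<Sum>(j,i)\<in>F\<times>F. cnj (x j) * s i j * x i) \<in> {z. Im z = 0 \<and> Re z \<ge> 0}"
proof (rule Lim_in_closed_set[OF closedK])
  show "(\<lambda>n. \<Sum>(j,i)\<in>F\<times>F. cnj (x j) * \<rho> n (ket i) j * x i) \<longlonglongrightarrow> (\<Sum>(j,i)\<in>F\<times>F. cnj (x j) * s i j * x i)"
    unfolding case_prod_unfold by (intro tendsto_intros s_lim)
  show "\<forall>\<^sub>F n in sequentially. (\<Sum>(j,i)\<in>F\<times>F. cnj (x j) * \<rho> n (ket i) j * x i) \<in> {z. Im z = 0 \<and> Re z \<ge> 0}"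
    using fin_quad_K[OF F] by simp
qed simp

lemma sq_filterlim: "filterlim (\<lambda>F. F \<times> F) (finite_subsets_at_top UNIV) (finite_subsets_at_top UNIV)"
  unfolding filterlim_finite_subsets_at_top
proof (intro allI impI)
  fix X :: "('a \<times> 'a) set" assume X: "finite X \<and> X \<subseteq> UNIV"
  show "\<forall>\<^sub>F F in finite_subsets_at_top UNIV. finite (F \<times> F) \<and> X \<subseteq> F \<times> F \<and> F \<times> F \<subseteq> UNIV"
    unfolding eventually_finite_subsets_at_top
    by (rule exI[of _ "fst ` X \<union> snd ` X"]) (use X in \<open>auto intro: rev_image_eqI\<close>)
qed

lemma \<sigma>_psd: "psd_op \<sigma>"
  unfolding psd_op_def
proof (intro ballI)
  fix x :: "'i \<Rightarrow> complex" assume x: "x \<in> l2"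
  let ?G = "\<lambda>(j,i). cnj (x j) * s i j * x i"
  have ps: "?G summable_on UNIV" by (rule pair_summ[OF x x])
  have "cinner x (\<sigma> x) = infsum ?G UNIV"
    unfolding cinner_\<sigma> using infsum_Sigma_banach[of ?G UNIV "\<lambda>_. UNIV"] ps by simp
  hence "(?G has_sum cinner x (\<sigma> x)) UNIV" using has_sum_infsum[OF ps] by simp
  hence l1: "(sum ?G \<longlongrightarrow> cinner x (\<sigma> x)) (finite_subsets_at_top UNIV)" unfolding has_sum_def .
  have l2': "((\<lambda>F. sum ?G (F \<times> F)) \<longlongrightarrow> cinner x (\<sigma> x)) (finite_subsets_at_top UNIV)"
    by (rule filterlim_compose[OF l1 sq_filterlim])
  have "cinner x (\<sigma> x) \<in> {z. Im z = 0 \<and> Re z \<ge> 0}"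
  proof (rule Lim_in_closed_set[OF closedK _ _ l2'])
    show "\<forall>\<^sub>F F in finite_subsets_at_top UNIV. sum ?G (F \<times> F) \<in> {z. Im z = 0 \<and> Re z \<ge> 0}"
      by (rule eventually_finite_subsets_at_top_weakI) (rule fin_quad_K_lim)
  qed simp
  thus "Im (cinner x (\<sigma> x)) = 0 \<and> Re (cinner x (\<sigma> x)) \<ge> 0" by simp
qed


definition D :: "'i \<Rightarrow> real" where "D i = Re (s i i)"

lemma s_diag_K: "s i i \<in> {z. Im z = 0 \<and> Re z \<ge> 0}"
proof (rule Lim_in_closed_set[OF closedK _ _ s_lim])
  show "\<forall>\<^sub>F n in sequentially. \<rho> n (ket i) i \<in> {z. Im z = 0 \<and> Re z \<ge> 0}"
    using dens_diag[OF d] by simp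
qed simp

lemma D_nonneg: "D i \<ge> 0" using s_diag_K[of i] by (simp add: D_def)
lemma s_diag_eq: "s i i = complex_of_real (D i)" using s_diag_K[of i] by (simp add: D_def complex_eq_iff)

lemma D_lim: "(\<lambda>n. Re (\<rho> n (ket i) i)) \<longlonglongrightarrow> D i"
  unfolding D_def by (rule tendsto_Re[OF s_lim])

lemma D_fin: "finite G \<Longrightarrow> (\<Sum>i\<in>G. D i) \<le> 1"
proof -
  assume G: "finite G"
  have "(\<lambda>n. \<Sum>i\<in>G. Re (\<rho> n (ket i) i)) \<longlonglongrightarrow> (\<Sum>i\<in>G. D i)" by (intro tendsto_sum D_lim)
  moreover have "\<exists>N. \<forall>n\<ge>N. (\<Sum>i\<in>G. Re (\<rho> n (ket i) i)) \<le> 1" using dens_fin_diag[OF d G] by blast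
  ultimately show ?thesis by (rule LIMSEQ_le_const2)
qed

lemma DE_fin: "finite G \<Longrightarrow> (\<Sum>i\<in>G. D i * Ev i) \<le> E"
proof -
  assume G: "finite G"
  have "(\<lambda>n. \<Sum>i\<in>G. Re (\<rho> n (ket i) i) * Ev i) \<longlonglongrightarrow> (\<Sum>i\<in>G. D i * Ev i)" by (intro tendsto_intros D_lim)
  moreover have "(\<Sum>i\<in>G. Re (\<rho> n (ket i) i) * Ev i) \<le> E" for n
  proof -
    have sE: "(\<lambda>i. Re (\<rho> n (ket i) i) * Ev i) summable_on UNIV" using en[of n] unfolding energy_bounded_def by (simp add: cinner_ket)
    have iE: "(\<Sum>\<^sub>\<infinity>i. Re (\<rho> n (ket i) i) * Ev i) \<le> E" using en[of n] unfolding energy_bounded_def by (simp add: cinner_ket)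
    have "(\<Sum>i\<in>G. Re (\<rho> n (ket i) i) * Ev i) \<le> (\<Sum>\<^sub>\<infinity>i. Re (\<rho> n (ket i) i) * Ev i)"
      by (rule finite_sum_le_infsum[OF sE G]) (use dens_diag[OF d] pos in auto)
    thus ?thesis using iE by linarith
  qed
  hence "\<exists>N. \<forall>n\<ge>N. (\<Sum>i\<in>G. Re (\<rho> n (ket i) i) * Ev i) \<le> E" by blast
  ultimately show ?thesis by (rule LIMSEQ_le_const2)
qed

lemma D_low: "C > 0 \<Longrightarrow> (\<Sum>i\<in>{i. Ev i \<le> C}. D i) \<ge> 1 - E / C"
proof -
  assume C: "C > 0"
  have L: "finite {i. Ev i \<le> C}" by (rule fin_level[OF unb pos])
  have "(\<lambda>n. \<Sum>i\<in>{i. Ev i \<le> C}. Re (\<rho> n (ket i) i)) \<longlonglongrightarrow> (\<Sum>i\<in>{i. Ev i \<le> C}. D i)" by (intro tendsto_sum D_lim)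
  moreover have "\<exists>N. \<forall>n\<ge>N. 1 - E / C \<le> (\<Sum>i\<in>{i. Ev i \<le> C}. Re (\<rho> n (ket i) i))"
    using tight[OF d en pos C L] by blast
  ultimately show ?thesis by (rule LIMSEQ_le_const)
qed

lemma D_summ: "D summable_on UNIV"
  by (rule bdd_summ[where K=1]) (use D_nonneg D_fin in auto)

lemma DE_summ: "(\<lambda>i. D i * Ev i) summable_on UNIV"
  by (rule bdd_summ[where K=E]) (use D_nonneg DE_fin pos in auto)

lemma D_inf: "(\<Sum>\<^sub>\<infinity>i. D i) = 1"
proof (rule antisym)
  show "(\<Sum>\<^sub>\<infinity>i. D i) \<le> 1" by (rule bdd_infsum[where K=1]) (use D_nonneg D_fin in auto)
  show "1 \<le> (\<Sum>\<^sub>\<infinity>i. D i)"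
  proof (rule ccontr)
    assume "\<not> 1 \<le> (\<Sum>\<^sub>\<infinity>i. D i)"
    hence dl: "0 < 1 - (\<Sum>\<^sub>\<infinity>i. D i)" by simp
    define C where "C = 2 * E / (1 - (\<Sum>\<^sub>\<infinity>i. D i))"
    have C: "C > 0" unfolding C_def using Epos dl by simp
    have L: "finite {i. Ev i \<le> C}" by (rule fin_level[OF unb pos])
    have "1 - E / C \<le> (\<Sum>i\<in>{i. Ev i \<le> C}. D i)" by (rule D_low[OF C])
    also have "\<dots> \<le> (\<Sum>\<^sub>\<infinity>i. D i)" by (rule finite_sum_le_infsum[OF D_summ L]) (use D_nonneg in auto)
    finally have "1 - E / C \<le> (\<Sum>\<^sub>\<infinity>i. D i)" .
    moreover have "E / C = (1 - (\<Sum>\<^sub>\<infinity>i. D i)) / 2" unfolding C_def using Epos dl by (simp add: field_simps)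
    ultimately have "1 - (1 - (\<Sum>\<^sub>\<infinity>i. D i)) / 2 \<le> (\<Sum>\<^sub>\<infinity>i. D i)" by simp
    thus False using dl by (simp add: field_simps)
  qed
qed

lemma \<sigma>_density: "density_op \<sigma>"
proof -
  have diag: "cinner (ket i) (\<sigma> (ket i)) = complex_of_real (D i)" for i
    by (simp add: cinner_ket \<sigma>_ket s_diag_eq)
  have tc: "trace_class_pos \<sigma>" unfolding trace_class_pos_def diag using D_summ by simp
  have "trace_op \<sigma> = (\<Sum>\<^sub>\<infinity>i. complex_of_real (D i))" unfolding trace_op_def diag ..
  also have "\<dots> = complex_of_real (\<Sum>\<^sub>\<infinity>i. D i)"
    by (rule infsumI[OF has_sum_of_real[OF has_sum_infsum[OF D_summ]]])
  finally have tr: "trace_op \<sigma> = 1" using D_inf by simp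
  show ?thesis unfolding density_op_def using \<sigma>_bounded \<sigma>_herm \<sigma>_psd tc tr by blast
qed

lemma \<sigma>_energy: "energy_bounded Ev E \<sigma>"
proof -
  have diag: "Re (cinner (ket i) (\<sigma> (ket i))) = D i" for i
    by (simp add: cinner_ket \<sigma>_ket D_def)
  show ?thesis unfolding energy_bounded_def diag
    using DE_summ bdd_infsum[where K=E, of "\<lambda>i. D i * Ev i"] D_nonneg DE_fin pos by auto
qed

lemma \<sigma>_in: "\<sigma> \<in> Pset Ev E" unfolding Pset_def using \<sigma>_density \<sigma>_energy by simp

lemma conv: "(\<lambda>n. hs_norm (\<lambda>x. \<rho> n x - \<sigma> x)) \<longlonglongrightarrow> 0"
proof (rule LIMSEQ_I)
  fix r :: real assume r: "r > 0"
  hence r2: "r / 2 > 0" by simp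
  obtain N where N: "\<forall>n\<ge>N. \<forall>F. finite F \<longrightarrow> (\<Sum>(i,j)\<in>F. (cmod (\<rho> n (ket i) j - s i j))\<^sup>2) \<le> (r/2)\<^sup>2"
    using tail[OF r2] by blast
  show "\<exists>no. \<forall>n\<ge>no. norm (hs_norm (\<lambda>x. \<rho> n x - \<sigma> x) - 0) < r"
  proof (intro exI allI impI)
    fix n assume n: "n \<ge> N"
    have sm: "(\<lambda>(i,j). (cmod (\<rho> n (ket i) j - s i j))\<^sup>2) summable_on UNIV"
    proof (rule summable_on_comparison_test[where f="\<lambda>p. (case p of (i,j) \<Rightarrow> 2 * (cmod (\<rho> n (ket i) j))\<^sup>2) + (case p of (i,j) \<Rightarrow> 2 * (cmod (s i j))\<^sup>2)"])
      show "(\<lambda>p. (case p of (i,j) \<Rightarrow> 2 * (cmod (\<rho> n (ket i) j))\<^sup>2) + (case p of (i,j) \<Rightarrow> 2 * (cmod (s i j))\<^sup>2)) summable_on UNIV"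
        by (rule summable_on_add) (simp_all add: case_prod_unfold summable_on_cmult_right dens_hs_summ[OF d, unfolded case_prod_unfold] s_summ[unfolded case_prod_unfold])
      fix p :: "'i \<times> 'i"
      show "(case p of (i,j) \<Rightarrow> (cmod (\<rho> n (ket i) j - s i j))\<^sup>2) \<le> (case p of (i,j) \<Rightarrow> 2 * (cmod (\<rho> n (ket i) j))\<^sup>2) + (case p of (i,j) \<Rightarrow> 2 * (cmod (s i j))\<^sup>2)"
        by (cases p) (simp add: sq_diff_le)
      show "0 \<le> (case p of (i,j) \<Rightarrow> (cmod (\<rho> n (ket i) j - s i j))\<^sup>2)" by (cases p) simp
    qed
    have sm': "(\<lambda>(i,j). (cmod ((\<lambda>x. \<rho> n x - \<sigma> x) (ket i) j))\<^sup>2) summable_on UNIV"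
      using sm by (simp add: \<sigma>_ket)
    have "(hs_norm (\<lambda>x. \<rho> n x - \<sigma> x))\<^sup>2 = (\<Sum>\<^sub>\<infinity>(i,j). (cmod ((\<lambda>x. \<rho> n x - \<sigma> x) (ket i) j))\<^sup>2)"
      by (rule hs_norm_prod[OF sm'])
    also have "\<dots> = (\<Sum>\<^sub>\<infinity>(i,j). (cmod (\<rho> n (ket i) j - s i j))\<^sup>2)" by (simp add: \<sigma>_ket)
    also have "\<dots> \<le> (r/2)\<^sup>2"
      by (rule infsum_le_finite_sums[OF sm]) (use N n in blast)
    finally have "(hs_norm (\<lambda>x. \<rho> n x - \<sigma> x))\<^sup>2 \<le> (r/2)\<^sup>2" .
    hence "hs_norm (\<lambda>x. \<rho> n x - \<sigma> x) \<le> r/2" by (rule power2_le_imp_le) (use r in simp)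
    moreover have "hs_norm (\<lambda>x. \<rho> n x - \<sigma> x) \<ge> 0" unfolding hs_norm_def by (simp add: infsum_nonneg)
    ultimately show "norm (hs_norm (\<lambda>x. \<rho> n x - \<sigma> x) - 0) < r" using r by simp
  qed
qed

end


theorem mainTheorem8:
  fixes Ev :: "'i::countable \<Rightarrow> real" and E :: real
    and \<rho> :: "nat \<Rightarrow> ('i \<Rightarrow> complex) \<Rightarrow> ('i \<Rightarrow> complex)"
  assumes pos: "\<forall>i. Ev i \<ge> 0"
    and unb: "no_bounded_inf_subspace Ev"
    and Epos: "E > 0"
    and inP: "\<forall>n. \<rho> n \<in> Pset Ev E"
    and cauchy: "\<forall>\<epsilon>>0. \<exists>N. \<forall>m\<ge>N. \<forall>n\<ge>N. hs_norm (\<lambda>x. \<rho> m x - \<rho> n x) < \<epsilon>"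
  shows "\<exists>\<sigma>\<in>Pset Ev E. (\<lambda>n. hs_norm (\<lambda>x. \<rho> n x - \<sigma> x)) \<longlonglongrightarrow> 0"
proof -
  interpret S: setting Ev E \<rho> using assms by unfold_locales
  show ?thesis using S.\<sigma>_in S.conv by blast
qed

end
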